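(* $rx_3(K_{2,t})=4$ for every $5\leq t\leq 8$, and $rx_3(K_{2,t})\geq 5$ for every $t\geq 9$.
   Context: An edge coloring of a graph $G$ is any assignment of colors to the edges (adjacent edges may receive the same color). A tree $T$ in an edge-colored graph is a rainbow tree if no two edges of $T$ have the same color. For $S\subseteq V(G)$, an $S$-tree is a subtree of $G$ containing all vertices of $S$. A $3$-rainbow coloring of $G$ is an edge coloring such that for every set $S$ of $3$ vertices of $G$ there is a rainbow $S$-tree in $G$. The $3$-rainbow index $rx_3(G)$ is the minimum number of colors in a $3$-rainbow coloring of $G$. $K_{2,t}$ denotes the complete bipartite graph with parts of sizes $2$ and $t$. *)

theory Defs
  imports Main
begin

type_synonym 'a graph = "'a set \<times> 'a set set"

definition verts :: "'a graph \<Rightarrow> 'a set" where "verts G = fst G"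
definition edges :: "'a graph \<Rightarrow> 'a set set" where "edges G = snd G"

definition simple_graph :: "'a graph \<Rightarrow> bool" where
  "simple_graph G \<longleftrightarrow> finite (verts G) \<and>
     (\<forall>e\<in>edges G. \<exists>u v. e = {u, v} \<and> u \<noteq> v \<and> u \<in> verts G \<and> v \<in> verts G)"

definition subgraph :: "'a graph \<Rightarrow> 'a graph \<Rightarrow> bool" where
  "subgraph H G \<longleftrightarrow> verts H \<subseteq> verts G \<and> edges H \<subseteq> edges G \<and>
     (\<forall>e\<in>edges H. e \<subseteq> verts H)"

definition adj :: "'a graph \<Rightarrow> 'a \<Rightarrow> 'a \<Rightarrow> bool" where
  "adj G u v \<longleftrightarrow> {u, v} \<in> edges G \<and> u \<noteq> v"

definition connected_graph :: "'a graph \<Rightarrow> bool" where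
  "connected_graph G \<longleftrightarrow> verts G \<noteq> {} \<and>
     (\<forall>u\<in>verts G. \<forall>v\<in>verts G. (adj G)\<^sup>*\<^sup>* u v)"

definition is_cycle :: "'a graph \<Rightarrow> 'a list \<Rightarrow> bool" where
  "is_cycle G xs \<longleftrightarrow> length xs \<ge> 3 \<and> distinct xs \<and> set xs \<subseteq> verts G \<and>
     (\<forall>i. Suc i < length xs \<longrightarrow> adj G (xs ! i) (xs ! Suc i)) \<and>
     adj G (last xs) (hd xs)"

definition acyclic_graph :: "'a graph \<Rightarrow> bool" where
  "acyclic_graph G \<longleftrightarrow> (\<nexists>xs. is_cycle G xs)"

definition is_tree :: "'a graph \<Rightarrow> bool" where
  "is_tree T \<longleftrightarrow> simple_graph T \<and> connected_graph T \<and> acyclic_graph T"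

definition rainbow_S_tree :: "'a graph \<Rightarrow> ('a set \<Rightarrow> nat) \<Rightarrow> 'a set \<Rightarrow> 'a graph \<Rightarrow> bool" where
  "rainbow_S_tree G c S T \<longleftrightarrow> subgraph T G \<and> is_tree T \<and> S \<subseteq> verts T \<and>
     inj_on c (edges T)"

definition three_rainbow_coloring :: "'a graph \<Rightarrow> ('a set \<Rightarrow> nat) \<Rightarrow> bool" where
  "three_rainbow_coloring G c \<longleftrightarrow>
     (\<forall>S. S \<subseteq> verts G \<and> card S = 3 \<longrightarrow> (\<exists>T. rainbow_S_tree G c S T))"

definition rx3 :: "'a graph \<Rightarrow> nat" where
  "rx3 G = (LEAST k. \<exists>c. three_rainbow_coloring G c \<and> card (c ` edges G) = k)"

definition K2t :: "nat \<Rightarrow> nat graph" where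
  "K2t t = ({0..<t+2}, {{i, j} | i j. i \<in> {0,1} \<and> j \<in> {2..<t+2}})"

end

theory Submission
  imports Defs
begin

definition mid :: "(nat \<Rightarrow> nat) \<Rightarrow> (nat \<Rightarrow> nat) \<Rightarrow> nat \<Rightarrow> nat \<Rightarrow> nat \<Rightarrow> bool" where
  "mid a b m j k \<longleftrightarrow> (\<exists>x\<in>{a j, b j}. \<exists>y\<in>{a k, b k}. distinct [a m, b m, x, y])"

definition good :: "(nat \<Rightarrow> nat) \<Rightarrow> (nat \<Rightarrow> nat) \<Rightarrow> nat \<Rightarrow> nat \<Rightarrow> nat \<Rightarrow> bool" where
  "good a b i j k \<longleftrightarrow> distinct [a i, a j, a k] \<or> distinct [b i, b j, b k] \<or>
     mid a b i j k \<or> mid a b j i k \<or> mid a b k i j"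

lemma L1:
  assumes "good a b i j k" "a i = a j" "a j = a k"
  shows "distinct [b i, b j, b k]"
  using assms unfolding good_def mid_def by auto

lemma L1':
  assumes "good a b i j k" "b i = b j" "b j = b k"
  shows "distinct [a i, a j, a k]"
  using assms unfolding good_def mid_def by auto

lemma L2:
  assumes "good a b i1 i2 z" "good a b i1 i3 z" "good a b i2 i3 z"
    "a i1 = a0" "a i2 = a0" "a i3 = a0" "distinct [b i1, b i2, b i3]" "a z \<noteq> a0" "b z = b i1"
  shows "distinct [a0, b i1, b i2, b i3, a z]"
  using assms unfolding good_def mid_def by auto


lemma three_elems:
  assumes "finite R" "3 \<le> card R"
  obtains x y z where "x \<in> R" "y \<in> R" "z \<in> R" "distinct [x,y,z]"
proof -
  obtain S where "S \<subseteq> R" "card S = 3" using obtain_subset_with_card_n[OF assms(2)] by blast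
  then obtain x y z where "S = {x,y,z}" "x \<noteq> y" "y \<noteq> z" "x \<noteq> z" by (auto simp: card_3_iff)
  then show ?thesis using that \<open>S \<subseteq> R\<close> by auto
qed

lemma card_ge_distinct:
  assumes "finite C" "set L \<subseteq> C" "distinct L"
  shows "length L \<le> card C"
  using card_mono[OF assms(1,2)] distinct_card[OF assms(3)] by simp

lemma four_colors:
  fixes a b :: "nat \<Rightarrow> nat"
  assumes C: "finite C" "card C \<le> 4" and ab: "a ` W \<subseteq> C" "b ` W \<subseteq> C"
    and W: "finite W" "9 \<le> card W"
    and gd: "\<And>i j k. i \<in> W \<Longrightarrow> j \<in> W \<Longrightarrow> k \<in> W \<Longrightarrow> distinct [i,j,k] \<Longrightarrow> good a b i j k"
  shows False
proof -
  have no5: False if "set L \<subseteq> C" "distinct L" "length L = 5" for L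
    using card_ge_distinct[OF C(1) that(1,2)] that(3) C(2) by simp
  obtain a0 where R3: "3 \<le> card {w\<in>W. a w = a0}"
  proof (rule ccontr)
    assume "\<not> thesis"
    have le2: "card {w\<in>W. a w = x} \<le> 2" for x using that[of x] \<open>\<not> thesis\<close> by linarith
    have "W = (\<Union>x\<in>C. {w\<in>W. a w = x})" using ab by auto
    then have "card W \<le> (\<Sum>x\<in>C. card {w\<in>W. a w = x})"
      by (metis card_UN_le C(1))
    also have "\<dots> \<le> card C * 2" using sum_bounded_above[of C "\<lambda>x. card {w\<in>W. a w = x}" 2] le2 by simp
    finally show False using C(2) W(2) by simp
  qed
  define R where "R = {w\<in>W. a w = a0}"
  have fR: "finite R" using W(1) R_def by simp
  have RW: "R \<subseteq> W" using R_def by auto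
  have binj: "inj_on b R"
  proof (rule inj_onI, rule ccontr)
    fix i j assume ij: "i \<in> R" "j \<in> R" "b i = b j" "i \<noteq> j"
    have "card (R - {i,j}) \<ge> 1"
    proof -
      have "card (R - {i,j}) = card R - 2"
        using ij fR by (subst card_Diff_subset) auto
      then show ?thesis using R3 R_def by simp
    qed
    then have "R - {i,j} \<noteq> {}" by (intro notI) simp
    then obtain k where k: "k \<in> R" "k \<noteq> i" "k \<noteq> j" by blast
    have "good a b i j k" using gd ij k RW by auto
    then have "distinct [b i, b j, b k]" using L1 ij k R_def by auto
    then show False using ij by simp
  qed
  have cR: "card R \<le> 4"
    using card_image[OF binj] card_mono[OF C(1), of "b ` R"] ab RW C(2) by fastforce
  obtain i1 i2 i3 where i: "i1 \<in> R" "i2 \<in> R" "i3 \<in> R" "distinct [i1,i2,i3]"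
    using three_elems[OF fR] R3 R_def by blast
  have bi: "distinct [b i1, b i2, b i3]" using binj i by (auto dest: inj_onD)
  have ai: "a i1 = a0" "a i2 = a0" "a i3 = a0" using i R_def by auto
  have iW: "i1 \<in> W" "i2 \<in> W" "i3 \<in> W" using i RW by auto
  have col: "b z \<notin> {b i1, b i2, b i3}" if z: "z \<in> W - R" for z
  proof
    assume bz: "b z \<in> {b i1, b i2, b i3}"
    have az: "a z \<noteq> a0" using z R_def by auto
    have zd: "z \<noteq> i1" "z \<noteq> i2" "z \<noteq> i3" using z i by auto
    have zW: "z \<in> W" using z by auto
    have g: "\<And>p q. p \<in> {i1,i2,i3} \<Longrightarrow> q \<in> {i1,i2,i3} \<Longrightarrow> p \<noteq> q \<Longrightarrow> good a b p q z"
      using gd iW zW zd by auto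
    have inC: "\<And>w. w \<in> W \<Longrightarrow> a w \<in> C \<and> b w \<in> C" using ab by auto
    from bz consider "b z = b i1" | "b z = b i2" | "b z = b i3" by auto
    then show False
    proof cases
      case 1
      have "distinct [a0, b i1, b i2, b i3, a z]"
        by (rule L2[where ?i1.0=i1 and ?i2.0=i2 and ?i3.0=i3 and z=z]) (use g i ai bi az 1 in auto)
      then show False using no5[of "[a0, b i1, b i2, b i3, a z]"] inC iW zW ai by auto
    next
      case 2
      have "distinct [a0, b i2, b i1, b i3, a z]"
        by (rule L2[where ?i1.0=i2 and ?i2.0=i1 and ?i3.0=i3 and z=z]) (use g i ai bi az 2 in auto)
      then show False using no5[of "[a0, b i2, b i1, b i3, a z]"] inC iW zW ai by auto
    next
      case 3
      have "distinct [a0, b i3, b i1, b i2, a z]"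
        by (rule L2[where ?i1.0=i3 and ?i2.0=i1 and ?i3.0=i2 and z=z]) (use g i ai bi az 3 in auto)
      then show False using no5[of "[a0, b i3, b i1, b i2, a z]"] inC iW zW ai by auto
    qed
  qed
  have same: "b z = b z'" if "z \<in> W - R" "z' \<in> W - R" for z z'
  proof (rule ccontr)
    assume "b z \<noteq> b z'"
    then have "distinct [b i1, b i2, b i3, b z, b z']" using col[OF that(1)] col[OF that(2)] bi by auto
    then show False using no5[of "[b i1, b i2, b i3, b z, b z']"] ab iW that by auto
  qed
  have cO: "card (W - R) \<le> 4"
  proof (cases "card (W - R) \<ge> 3")
    case True
    have ainj: "inj_on a (W - R)"
    proof (rule inj_onI, rule ccontr)
      fix i j assume ij: "i \<in> W - R" "j \<in> W - R" "a i = a j" "i \<noteq> j"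
      have "card (W - R - {i,j}) \<ge> 1"
      proof -
        have "card (W - R - {i,j}) = card (W - R) - 2"
          using ij W(1) by (subst card_Diff_subset) auto
        then show ?thesis using True by simp
      qed
      then have "W - R - {i,j} \<noteq> {}" by (intro notI) simp
      then obtain k where k: "k \<in> W - R" "k \<noteq> i" "k \<noteq> j" by blast
      have "good a b i j k" using gd ij k by auto
      then have "distinct [a i, a j, a k]" using L1' same ij k by metis
      then show False using ij by simp
    qed
    show ?thesis
      using card_image[OF ainj] card_mono[OF C(1), of "a ` (W - R)"] ab C(2) by fastforce
  qed simp
  have "card W = card R + card (W - R)"
    using RW fR W(1) by (metis card_Diff_subset add_diff_inverse_nat card_mono not_less)
  then show False using cR cO W(2) by simp
qed


lemma three_colors:
  fixes a b :: "nat \<Rightarrow> nat"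
  assumes C: "finite C" "card C \<le> 3" and ab: "a ` W \<subseteq> C" "b ` W \<subseteq> C"
    and W: "finite W" "5 \<le> card W"
    and gd: "\<And>i j k. i \<in> W \<Longrightarrow> j \<in> W \<Longrightarrow> k \<in> W \<Longrightarrow> distinct [i,j,k] \<Longrightarrow>
               distinct [a i, a j, a k] \<or> distinct [b i, b j, b k]"
  shows False
proof -
  have no4: False if "set L \<subseteq> C" "distinct L" "length L = 4" for L
    using card_ge_distinct[OF C(1) that(1,2)] that(3) C(2) by simp
  have "\<not> inj_on a W"
  proof
    assume "inj_on a W"
    then have "card W \<le> card C" using card_image card_mono[OF C(1) ab(1)] by metis
    then show False using C W by simp
  qed
  then obtain i j where ij: "i \<in> W" "j \<in> W" "i \<noteq> j" "a i = a j" unfolding inj_on_def by blast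
  have "card (W - {i,j}) = card W - 2" using ij W(1) by (subst card_Diff_subset) auto
  then have "3 \<le> card (W - {i,j})" using W(2) by simp
  then obtain y1 y2 y3 where y: "y1 \<in> W - {i,j}" "y2 \<in> W - {i,j}" "y3 \<in> W - {i,j}" "distinct [y1,y2,y3]"
    using three_elems[of "W - {i,j}"] W(1) by blast
  have inC: "\<And>w. w \<in> W \<Longrightarrow> a w \<in> C \<and> b w \<in> C" using ab by auto
  have bd: "distinct [b i, b j, b y]" if "y \<in> W - {i,j}" for y
    using gd[of i j y] ij that by auto
  have eq: "b y = b y'" if "y \<in> W - {i,j}" "y' \<in> W - {i,j}" for y y'
  proof (rule ccontr)
    assume "b y \<noteq> b y'"
    then have "distinct [b i, b j, b y, b y']" using bd[OF that(1)] bd[OF that(2)] by auto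
    then show False using no4[of "[b i, b j, b y, b y']"] inC that ij by auto
  qed
  have ad: "distinct [a y1, a y2, a y3]"
    using gd[of y1 y2 y3] y eq[of y1 y2] eq[of y2 y3] by auto
  have "a i \<in> {a y1, a y2, a y3}"
  proof (rule ccontr)
    assume "a i \<notin> {a y1, a y2, a y3}"
    then have "distinct [a i, a y1, a y2, a y3]" using ad by auto
    then show False using no4[of "[a i, a y1, a y2, a y3]"] inC y ij by auto
  qed
  then show False
    using gd[of i y1 y2] gd[of i y2 y3] gd[of i y1 y3] y ij eq[of y1 y2] eq[of y2 y3] eq[of y1 y3]
    by auto
qed

lemma good_three:
  assumes "finite C" "card C \<le> 3" "a ` W \<subseteq> C" "b ` W \<subseteq> C" "i \<in> W" "j \<in> W" "k \<in> W"
    "good a b i j k"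
  shows "distinct [a i, a j, a k] \<or> distinct [b i, b j, b k]"
proof (rule ccontr)
  assume n: "\<not> ?thesis"
  have inC: "\<And>w. w \<in> W \<Longrightarrow> a w \<in> C \<and> b w \<in> C" using assms by auto
  have "\<exists>L. set L \<subseteq> {a i, a j, a k, b i, b j, b k} \<and> distinct L \<and> length L = 4"
  proof -
    from n assms(8) have "mid a b i j k \<or> mid a b j i k \<or> mid a b k i j" unfolding good_def by blast
    then show ?thesis
    proof (elim disjE)
      assume "mid a b i j k"
      then obtain x y where "x \<in> {a j, b j}" "y \<in> {a k, b k}" "distinct [a i, b i, x, y]"
        unfolding mid_def by blast
      then show ?thesis by (intro exI[of _ "[a i, b i, x, y]"]) auto
    next
      assume "mid a b j i k"
      then obtain x y where "x \<in> {a i, b i}" "y \<in> {a k, b k}" "distinct [a j, b j, x, y]"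
        unfolding mid_def by blast
      then show ?thesis by (intro exI[of _ "[a j, b j, x, y]"]) auto
    next
      assume "mid a b k i j"
      then obtain x y where "x \<in> {a i, b i}" "y \<in> {a j, b j}" "distinct [a k, b k, x, y]"
        unfolding mid_def by blast
      then show ?thesis by (intro exI[of _ "[a k, b k, x, y]"]) auto
    qed
  qed
  then obtain L where "set L \<subseteq> {a i, a j, a k, b i, b j, b k}" "distinct L" "length L = 4" by blast
  then show False using card_ge_distinct[OF assms(1), of L] inC assms(5-7) assms(2) by auto
qed


lemma adj_sym: "adj G u v \<Longrightarrow> adj G v u"
  unfolding adj_def by (auto simp add: insert_commute)

lemma cycle_nbrs:
  assumes c: "is_cycle G xs" and v: "v \<in> set xs"
  shows "\<exists>p q. p \<noteq> q \<and> p \<in> set xs \<and> q \<in> set xs \<and> adj G v p \<and> adj G v q"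
proof -
  let ?n = "length xs"
  have n3: "?n \<ge> 3" and d: "distinct xs" and st: "\<And>i. Suc i < ?n \<Longrightarrow> adj G (xs ! i) (xs ! Suc i)"
    and lh: "adj G (last xs) (hd xs)" using c unfolding is_cycle_def by auto
  obtain i where i: "i < ?n" "v = xs ! i" using v by (metis in_set_conv_nth)
  have ne: "xs \<noteq> []" using n3 by auto
  have hd: "hd xs = xs ! 0" using ne by (simp add: hd_conv_nth)
  have la: "last xs = xs ! (?n - 1)" using ne by (simp add: last_conv_nth)
  have neq: "\<And>p q. p < ?n \<Longrightarrow> q < ?n \<Longrightarrow> p \<noteq> q \<Longrightarrow> xs ! p \<noteq> xs ! q"
    using d by (simp add: nth_eq_iff_index_eq)
  have mem: "\<And>p. p < ?n \<Longrightarrow> xs ! p \<in> set xs" by simp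
  consider "i = 0" | "i = ?n - 1" | "0 < i" "i < ?n - 1" using i by linarith
  then show ?thesis
  proof cases
    case 1
    have a1: "adj G v (xs ! 1)" using st[of 0] n3 i 1 by simp
    have a2: "adj G v (xs ! (?n - 1))" using adj_sym[OF lh] hd la i 1 by simp
    have "xs ! 1 \<noteq> xs ! (?n - 1)" using neq[of 1 "?n - 1"] n3 by simp
    moreover have "xs ! 1 \<in> set xs" "xs ! (?n - 1) \<in> set xs" using mem[of 1] mem[of "?n - 1"] n3 by auto
    ultimately show ?thesis using a1 a2 by blast
  next
    case 2
    have "Suc (?n - 2) = ?n - 1" using n3 by simp
    then have "adj G (xs ! (?n - 2)) (xs ! (?n - 1))" using st[of "?n - 2"] n3 by simp
    then have a1: "adj G v (xs ! (?n - 2))" using 2 i adj_sym by simp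
    have a2: "adj G v (xs ! 0)" using lh hd la i 2 by simp
    have "xs ! (?n - 2) \<noteq> xs ! 0" using neq[of "?n - 2" 0] n3 ne by simp
    moreover have "xs ! (?n - 2) \<in> set xs" "xs ! 0 \<in> set xs" using n3 by (auto intro!: nth_mem)
    ultimately show ?thesis using a1 a2 by blast
  next
    case 3
    have "Suc (i - 1) = i" using 3 by simp
    then have "adj G (xs ! (i - 1)) (xs ! i)" using st[of "i - 1"] 3 by simp
    then have a1: "adj G v (xs ! (i - 1))" using 3 i adj_sym by simp
    have a2: "adj G v (xs ! Suc i)" using st[of i] 3 i by simp
    have "xs ! (i - 1) \<noteq> xs ! Suc i" using neq[of "i - 1" "Suc i"] 3 by simp
    moreover have "xs ! (i - 1) \<in> set xs" "xs ! Suc i \<in> set xs" using mem[of "i - 1"] mem[of "Suc i"] 3 by auto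
    ultimately show ?thesis using a1 a2 by blast
  qed
qed


definition trg :: "nat \<Rightarrow> nat set \<Rightarrow> nat set \<Rightarrow> nat \<Rightarrow> nat graph" where
  "trg x A B l = (insert x (insert (1-x) (A \<union> B)),
     (\<lambda>a. {x,a}) ` A \<union> (\<lambda>b. {1-x,b}) ` B \<union> {{1-x,l}})"

definition starg :: "nat \<Rightarrow> nat set \<Rightarrow> nat graph" where
  "starg x A = (insert x A, (\<lambda>a. {x,a}) ` A)"

lemma K2t_edge: "e \<in> edges (K2t t) \<longleftrightarrow> (\<exists>i j. e = {i,j} \<and> i \<le> 1 \<and> 2 \<le> j \<and> j < t+2)"
  unfolding K2t_def edges_def by (force simp: le_Suc_eq)

lemma K2t_edgeI: "i \<le> 1 \<Longrightarrow> 2 \<le> j \<Longrightarrow> j < t+2 \<Longrightarrow> {i,j} \<in> edges (K2t t)"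
  unfolding K2t_edge by blast

lemma K2t_verts: "verts (K2t t) = {0..<t+2}"
  unfolding K2t_def verts_def by simp

lemma connected_from:
  assumes "x \<in> verts G" "\<And>v. v \<in> verts G \<Longrightarrow> (adj G)\<^sup>*\<^sup>* x v"
  shows "connected_graph G"
proof -
  have sy: "symp (adj G)" by (auto intro: sympI adj_sym)
  have sy2: "symp ((adj G)\<^sup>*\<^sup>*)" using symp_rtranclp[OF sy] by simp
  from sy2 have bk: "\<And>v. v \<in> verts G \<Longrightarrow> (adj G)\<^sup>*\<^sup>* v x" using assms(2) by (meson sympD)
  show ?thesis unfolding connected_graph_def
  proof (intro conjI ballI)
    show "verts G \<noteq> {}" using assms(1) by blast
    fix u v assume "u \<in> verts G" "v \<in> verts G"
    then show "(adj G)\<^sup>*\<^sup>* u v" using bk assms(2) by (blast intro: rtranclp_trans)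
  qed
qed

lemma img_dbl: "{u,v} \<in> (\<lambda>a. {x,a}) ` A \<longleftrightarrow> (u = x \<and> v \<in> A) \<or> (v = x \<and> u \<in> A)"
  by (auto simp: doubleton_eq_iff)

lemma trg_props:
  fixes x :: nat
  assumes x: "x \<le> 1" and A: "A \<subseteq> {2..<t+2}" and B: "B \<subseteq> {2..<t+2}" and AB: "A \<inter> B = {}"
    and l: "l \<in> A"
  shows "subgraph (trg x A B l) (K2t t) \<and> is_tree (trg x A B l)"
proof -
  define y where "y = 1 - x"
  define G where "G = trg x A B l"
  have xy: "x \<noteq> y" "y \<le> 1" unfolding y_def using x by arith+
  have nA: "x \<notin> A" "y \<notin> A" "x \<notin> B" "y \<notin> B" using A B x xy by auto
  have fin: "finite A" "finite B" using A B finite_subset by auto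
  have V: "verts G = insert x (insert y (A \<union> B))" unfolding G_def trg_def verts_def y_def by simp
  have E: "edges G = (\<lambda>a. {x,a}) ` A \<union> (\<lambda>b. {y,b}) ` B \<union> {{y,l}}"
    unfolding G_def trg_def edges_def y_def by simp
  have adjc: "adj G u v \<longleftrightarrow> (u = x \<and> v \<in> A) \<or> (v = x \<and> u \<in> A) \<or>
        (u = y \<and> (v \<in> B \<or> v = l)) \<or> (v = y \<and> (u \<in> B \<or> u = l))" for u v
    unfolding adj_def E Un_iff img_dbl singleton_iff doubleton_eq_iff using nA xy l by blast
  have simple: "simple_graph G"
    unfolding simple_graph_def V E
  proof (intro conjI ballI)
    show "finite (insert x (insert y (A \<union> B)))" using fin by simp
    fix e assume "e \<in> (\<lambda>a. {x, a}) ` A \<union> (\<lambda>b. {y, b}) ` B \<union> {{y, l}}"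
    then consider a where "a \<in> A" "e = {x,a}" | b where "b \<in> B" "e = {y,b}" | "e = {y,l}" by blast
    then show "\<exists>u v. e = {u, v} \<and> u \<noteq> v \<and> u \<in> insert x (insert y (A \<union> B)) \<and> v \<in> insert x (insert y (A \<union> B))"
    proof cases
      case 1 then show ?thesis using nA by (intro exI[of _ x] exI[of _ a]) auto
    next
      case 2 then show ?thesis using nA by (intro exI[of _ y] exI[of _ b]) auto
    next
      case 3 then show ?thesis using nA l by (intro exI[of _ y] exI[of _ l]) auto
    qed
  qed
  have sub: "subgraph G (K2t t)"
    unfolding subgraph_def V E K2t_verts
  proof (intro conjI)
    show "insert x (insert y (A \<union> B)) \<subseteq> {0..<t + 2}" using A B x xy by auto
    show "(\<lambda>a. {x, a}) ` A \<union> (\<lambda>b. {y, b}) ` B \<union> {{y, l}} \<subseteq> edges (K2t t)"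
      using A B x xy l by (auto intro!: K2t_edgeI)
    show "\<forall>e\<in>(\<lambda>a. {x, a}) ` A \<union> (\<lambda>b. {y, b}) ` B \<union> {{y, l}}. e \<subseteq> insert x (insert y (A \<union> B))"
      using l by auto
  qed
  have conn: "connected_graph G"
  proof (rule connected_from)
    show "x \<in> verts G" using V by simp
    fix v assume v: "v \<in> verts G"
    have xl: "adj G x l" using adjc l by simp
    have ly: "adj G l y" using adjc by simp
    show "(adj G)\<^sup>*\<^sup>* x v"
    proof -
      consider "v = x" | "v \<in> A" | "v = y" | "v \<in> B" using v V by auto
      then show ?thesis
      proof cases
        case 1 then show ?thesis by simp
      next
        case 2 then have "adj G x v" using adjc by simp
        then show ?thesis by simp
      next
        case 3
        have "(adj G)\<^sup>*\<^sup>* x l" using xl by simp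
        then have "(adj G)\<^sup>*\<^sup>* x y" using ly by (rule rtranclp.rtrancl_into_rtrancl)
        then show ?thesis using 3 by simp
      next
        case 4 then have "adj G y v" using adjc by simp
        have "(adj G)\<^sup>*\<^sup>* x l" using xl by simp
        then have "(adj G)\<^sup>*\<^sup>* x y" using ly by (rule rtranclp.rtrancl_into_rtrancl)
        then show ?thesis using \<open>adj G y v\<close> by (rule rtranclp.rtrancl_into_rtrancl)
      qed
    qed
  qed
  have acyc: "acyclic_graph G"
    unfolding acyclic_graph_def
  proof
    assume "\<exists>xs. is_cycle G xs"
    then obtain xs where c: "is_cycle G xs" by blast
    have sv: "set xs \<subseteq> verts G" and n3: "length xs \<ge> 3" and d: "distinct xs"
      using c unfolding is_cycle_def by auto
    have sub3: "set xs \<subseteq> {x, y, l}"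
    proof
      fix v assume v: "v \<in> set xs"
      obtain p q where pq: "p \<noteq> q" "adj G v p" "adj G v q" using cycle_nbrs[OF c v] by blast
      show "v \<in> {x, y, l}"
      proof (rule ccontr)
        assume "v \<notin> {x, y, l}"
        then show False using pq adjc[of v p] adjc[of v q] nA AB by auto
      qed
    qed
    have "x \<in> set xs"
    proof (rule ccontr)
      assume "x \<notin> set xs"
      then have "set xs \<subseteq> {y, l}" using sub3 by auto
      then have "card (set xs) \<le> card {y, l}" by (intro card_mono) auto
      also have "\<dots> \<le> 2" by (simp add: card_insert_if)
      finally have "card (set xs) \<le> 2" .
      then show False using distinct_card[OF d] n3 by simp
    qed
    then obtain p q where pq: "p \<noteq> q" "p \<in> set xs" "q \<in> set xs" "adj G x p" "adj G x q"
      using cycle_nbrs[OF c] by blast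
    then show False using sub3 adjc[of x p] adjc[of x q] nA xy by auto
  qed
  show ?thesis using sub simple conn acyc unfolding is_tree_def G_def by simp
qed


lemma starg_props:
  fixes x :: nat
  assumes x: "x \<le> 1" and A: "A \<subseteq> {2..<t+2}"
  shows "subgraph (starg x A) (K2t t) \<and> is_tree (starg x A)"
proof -
  define G where "G = starg x A"
  have nA: "x \<notin> A" using A x by auto
  have fin: "finite A" using A finite_subset by auto
  have V: "verts G = insert x A" unfolding G_def starg_def verts_def by simp
  have E: "edges G = (\<lambda>a. {x,a}) ` A" unfolding G_def starg_def edges_def by simp
  have adjc: "adj G u v \<longleftrightarrow> (u = x \<and> v \<in> A) \<or> (v = x \<and> u \<in> A)" for u v
    unfolding adj_def E img_dbl using nA by blast
  have simple: "simple_graph G"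
    unfolding simple_graph_def V E
  proof (intro conjI ballI)
    show "finite (insert x A)" using fin by simp
    fix e assume "e \<in> (\<lambda>a. {x, a}) ` A"
    then obtain a where "a \<in> A" "e = {x,a}" by blast
    then show "\<exists>u v. e = {u, v} \<and> u \<noteq> v \<and> u \<in> insert x A \<and> v \<in> insert x A"
      using nA by (intro exI[of _ x] exI[of _ a]) auto
  qed
  have sub: "subgraph G (K2t t)"
    unfolding subgraph_def V E K2t_verts
  proof (intro conjI)
    show "insert x A \<subseteq> {0..<t + 2}" using A x by auto
    show "(\<lambda>a. {x, a}) ` A \<subseteq> edges (K2t t)" using A x by (auto intro!: K2t_edgeI)
    show "\<forall>e\<in>(\<lambda>a. {x, a}) ` A. e \<subseteq> insert x A" by auto
  qed
  have conn: "connected_graph G"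
  proof (rule connected_from)
    show "x \<in> verts G" using V by simp
    fix v assume v: "v \<in> verts G"
    show "(adj G)\<^sup>*\<^sup>* x v"
    proof (cases "v = x")
      case False
      then have "adj G x v" using adjc v V by simp
      then show ?thesis by simp
    qed simp
  qed
  have acyc: "acyclic_graph G"
    unfolding acyclic_graph_def
  proof
    assume "\<exists>xs. is_cycle G xs"
    then obtain xs where c: "is_cycle G xs" by blast
    have n3: "length xs \<ge> 3" and d: "distinct xs"
      using c unfolding is_cycle_def by auto
    have sub1: "set xs \<subseteq> {x}"
    proof
      fix v assume v: "v \<in> set xs"
      obtain p q where pq: "p \<noteq> q" "adj G v p" "adj G v q" using cycle_nbrs[OF c v] by blast
      show "v \<in> {x}"
      proof (rule ccontr)
        assume "v \<notin> {x}"
        then show False using pq adjc[of v p] adjc[of v q] nA by auto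
      qed
    qed
    have "card (set xs) \<le> card {x}" using sub1 by (intro card_mono) auto
    then show False using distinct_card[OF d] n3 by simp
  qed
  show ?thesis using sub simple conn acyc unfolding is_tree_def G_def by simp
qed

lemma adjK:
  assumes "subgraph T (K2t t)" "adj T p q"
  shows "(p \<le> 1 \<and> 2 \<le> q \<and> q < t+2) \<or> (q \<le> 1 \<and> 2 \<le> p \<and> p < t+2)"
proof -
  have "{p,q} \<in> edges (K2t t)" using assms unfolding subgraph_def adj_def by auto
  then obtain i j where "{p,q} = {i,j}" "i \<le> 1" "2 \<le> j" "j < t+2" unfolding K2t_edge by blast
  then show ?thesis by (auto simp: doubleton_eq_iff)
qed

lemma walk01:
  assumes sub: "subgraph T (K2t t)" and w: "(adj T)\<^sup>*\<^sup>* 0 1"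
  shows "\<exists>l. adj T 0 l \<and> adj T l 1"
proof -
  have "v = 0 \<or> (2 \<le> v \<and> adj T 0 v) \<or> (\<exists>l. adj T 0 l \<and> adj T l 1)"
    if "(adj T)\<^sup>*\<^sup>* 0 v" for v
    using that
  proof (induction rule: rtranclp_induct)
    case base then show ?case by simp
  next
    case (step v v')
    have k: "(v \<le> 1 \<and> 2 \<le> v' \<and> v' < t+2) \<or> (v' \<le> 1 \<and> 2 \<le> v \<and> v < t+2)"
      using adjK[OF sub step.hyps(2)] .
    from step.IH show ?case
    proof (elim disjE)
      assume "v = 0" then show ?case using step.hyps(2) k by auto
    next
      assume h: "2 \<le> v \<and> adj T 0 v"
      then have "v' = 0 \<or> v' = 1" using k by auto
      then show ?case using h step.hyps(2) by auto
    qed blast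
  qed
  from this[OF w] show ?thesis by simp
qed

lemma fin_edges: "finite (edges (K2t t))"
proof -
  have "edges (K2t t) \<subseteq> Pow {0..<t+2}"
  proof
    fix e assume "e \<in> edges (K2t t)"
    then obtain i j where "e = {i,j}" "i \<le> 1" "2 \<le> j" "j < t+2" unfolding K2t_edge by blast
    then show "e \<in> Pow {0..<t+2}" by auto
  qed
  then show ?thesis using finite_subset by blast
qed

lemma dbl_eq: "(s::nat) \<le> 1 \<Longrightarrow> s' \<le> 1 \<Longrightarrow> 2 \<le> w \<Longrightarrow> 2 \<le> w' \<Longrightarrow>
   ({s,w} = {s',w'}) = (s = s' \<and> w = w')"
  by (auto simp: doubleton_eq_iff)

lemma tree_good:
  fixes c :: "nat set \<Rightarrow> nat"
  assumes T: "rainbow_S_tree (K2t t) c {i,j,k} T"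
    and W: "i \<in> {2..<t+2}" "j \<in> {2..<t+2}" "k \<in> {2..<t+2}" "distinct [i,j,k]"
  shows "good (\<lambda>w. c {0,w}) (\<lambda>w. c {1,w}) i j k \<or> 5 \<le> card (c ` edges (K2t t))"
proof -
  have sub: "subgraph T (K2t t)" and tr: "is_tree T" and S: "{i,j,k} \<subseteq> verts T"
    and inj: "inj_on c (edges T)" using T unfolding rainbow_S_tree_def by auto
  have ET: "\<And>e. e \<in> edges T \<Longrightarrow> e \<in> edges (K2t t) \<and> e \<subseteq> verts T"
    using sub unfolding subgraph_def by auto
  have conn: "\<And>u v. u \<in> verts T \<Longrightarrow> v \<in> verts T \<Longrightarrow> (adj T)\<^sup>*\<^sup>* u v"
    using tr unfolding is_tree_def connected_graph_def by auto
  have nb: "\<exists>s\<le>1. {s,w} \<in> edges T" if w: "w \<in> {i,j,k}" for w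
  proof -
    obtain w' where w': "w' \<in> {i,j,k}" "w' \<noteq> w" using W(4) w by auto
    have "(adj T)\<^sup>*\<^sup>* w w'" using conn S w w' by auto
    then obtain z where z: "adj T w z" using w'(2) by (metis converse_rtranclpE)
    have "w \<ge> 2" using w W by auto
    then have "z \<le> 1" using adjK[OF sub z] by auto
    moreover have "{z,w} \<in> edges T" using z unfolding adj_def by (simp add: insert_commute)
    ultimately show ?thesis by blast
  qed
  obtain si where si: "si \<le> 1" "{si,i} \<in> edges T" using nb by blast
  obtain sj where sj: "sj \<le> 1" "{sj,j} \<in> edges T" using nb by blast
  obtain sk where sk: "sk \<le> 1" "{sk,k} \<in> edges T" using nb by blast
  have dist: "distinct (map c L)" if "set L \<subseteq> edges T" "distinct L" for L
    using that inj by (simp add: distinct_map inj_on_subset)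
  have cnt: "length L \<le> card (c ` edges (K2t t))" if "set L \<subseteq> edges T" "distinct L" for L
  proof -
    have "set (map c L) \<subseteq> c ` edges (K2t t)" using that ET by auto
    then show ?thesis using card_ge_distinct[OF _ _ dist[OF that]] fin_edges by simp
  qed
  have ge: "i \<ge> 2" "j \<ge> 2" "k \<ge> 2" using W by auto
  have cs: "c {s,w} \<in> {c {0,w}, c {1,w}}" if "s \<le> 1" for s w
    using that by (cases s) auto
  let ?a = "\<lambda>w. c {0,w}" and ?b = "\<lambda>w. c {1,w}"
  show ?thesis
  proof (cases "1 \<in> verts T")
    case False
    have "si \<noteq> 1" "sj \<noteq> 1" "sk \<noteq> 1" using False si sj sk ET by auto
    then have s0: "si = 0" "sj = 0" "sk = 0" using si sj sk by auto
    have "distinct (map c [{0,i},{0,j},{0,k}])"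
      using si sj sk s0 W(4) ge by (intro dist) (simp_all add: dbl_eq)
    then show ?thesis unfolding good_def by simp
  next
    case T1: True
    show ?thesis
    proof (cases "0 \<in> verts T")
      case False
      have "si \<noteq> 0" using False ET[OF si(2)] by (metis insert_subset)
      moreover have "sj \<noteq> 0" using False ET[OF sj(2)] by (metis insert_subset)
      moreover have "sk \<noteq> 0" using False ET[OF sk(2)] by (metis insert_subset)
      ultimately have "si \<noteq> 0 \<and> sj \<noteq> 0 \<and> sk \<noteq> 0" by blast
      then have s1: "si = 1" "sj = 1" "sk = 1" using si sj sk by auto
      have "distinct (map c [{1,i},{1,j},{1,k}])"
        using si sj sk s1 W(4) ge by (intro dist) (simp_all add: dbl_eq)
      then show ?thesis unfolding good_def by simp
    next
      case T0: True
      obtain l where l: "adj T 0 l" "adj T l 1" using walk01[OF sub conn[OF T0 T1]] by blast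
      have l2: "l \<ge> 2" using adjK[OF sub l(1)] by auto
      have e0: "{0,l} \<in> edges T" using l(1) unfolding adj_def by simp
      have e1: "{1,l} \<in> edges T" using l(2) unfolding adj_def by (simp add: insert_commute)
      consider "l = i" | "l = j" | "l = k" | "l \<notin> {i,j,k}" by auto
      then show ?thesis
      proof cases
        case 1
        have "distinct (map c [{0,i},{1,i},{sj,j},{sk,k}])"
          using e0 e1 1 sj sk W(4) ge by (intro dist) (simp_all add: dbl_eq)
        then have d: "distinct [c {0,i}, c {1,i}, c {sj,j}, c {sk,k}]" by simp
        have "c {sj,j} \<in> {c {0,j}, c {1,j}}" "c {sk,k} \<in> {c {0,k}, c {1,k}}"
          using cs[OF sj(1), of j] cs[OF sk(1), of k] by simp_all
        then have "mid ?a ?b i j k" unfolding mid_def using d by blast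
        then show ?thesis unfolding good_def by blast
      next
        case 2
        have "distinct (map c [{0,j},{1,j},{si,i},{sk,k}])"
          using e0 e1 2 si sk W(4) ge by (intro dist) (simp_all add: dbl_eq)
        then have d: "distinct [c {0,j}, c {1,j}, c {si,i}, c {sk,k}]" by simp
        have "c {si,i} \<in> {c {0,i}, c {1,i}}" "c {sk,k} \<in> {c {0,k}, c {1,k}}"
          using cs[OF si(1), of i] cs[OF sk(1), of k] by simp_all
        then have "mid ?a ?b j i k" unfolding mid_def using d by blast
        then show ?thesis unfolding good_def by blast
      next
        case 3
        have "distinct (map c [{0,k},{1,k},{si,i},{sj,j}])"
          using e0 e1 3 si sj W(4) ge by (intro dist) (simp_all add: dbl_eq)
        then have d: "distinct [c {0,k}, c {1,k}, c {si,i}, c {sj,j}]" by simp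
        have "c {si,i} \<in> {c {0,i}, c {1,i}}" "c {sj,j} \<in> {c {0,j}, c {1,j}}"
          using cs[OF si(1), of i] cs[OF sj(1), of j] by simp_all
        then have "mid ?a ?b k i j" unfolding mid_def using d by blast
        then show ?thesis unfolding good_def by blast
      next
        case 4
        have "length [{0,l},{1,l},{si,i},{sj,j},{sk,k}] \<le> card (c ` edges (K2t t))"
          using e0 e1 4 si sj sk W(4) ge l2 by (intro cnt) (simp_all add: dbl_eq)
        then show ?thesis by simp
      qed
    qed
  qed
qed


datatype wit = Sw nat "nat list" | Tw nat "nat list" "nat list" nat

fun wg :: "wit \<Rightarrow> nat graph" where
  "wg (Sw x A) = starg x (set A)"
| "wg (Tw x A B l) = trg x (set A) (set B) l"

fun wel :: "wit \<Rightarrow> (nat \<times> nat) list" where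
  "wel (Sw x A) = map (Pair x) A"
| "wel (Tw x A B l) = map (Pair x) A @ map (Pair (1-x)) B @ [(1-x,l)]"

fun wverts :: "wit \<Rightarrow> nat list" where
  "wverts (Sw x A) = x # A"
| "wverts (Tw x A B l) = x # (1-x) # A @ B"

fun wvalid :: "nat \<Rightarrow> wit \<Rightarrow> bool" where
  "wvalid t (Sw x A) = (x \<le> 1 \<and> list_all (\<lambda>a. 2 \<le> a \<and> a < t+2) A)"
| "wvalid t (Tw x A B l) = (x \<le> 1 \<and> list_all (\<lambda>a. 2 \<le> a \<and> a < t+2) A \<and>
     list_all (\<lambda>a. 2 \<le> a \<and> a < t+2) B \<and> list_all (\<lambda>a. a \<notin> set B) A \<and> l \<in> set A)"

lemma wg_props: "wvalid t w \<Longrightarrow> subgraph (wg w) (K2t t) \<and> is_tree (wg w)"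
proof (cases w)
  case (Sw x A)
  assume "wvalid t w"
  then have "x \<le> 1" "set A \<subseteq> {2..<t+2}" using Sw by (auto simp: list_all_iff)
  then show ?thesis using starg_props[of x "set A" t] Sw by simp
next
  case (Tw x A B l)
  assume "wvalid t w"
  then have "x \<le> 1" "set A \<subseteq> {2..<t+2}" "set B \<subseteq> {2..<t+2}" "set A \<inter> set B = {}" "l \<in> set A"
    using Tw by (auto simp: list_all_iff)
  then show ?thesis using trg_props[of x "set A" t "set B" l] Tw by simp
qed



lemma wg_edges: "edges (wg w) = (\<lambda>(s,v). {s,v}) ` set (wel w)"
  by (cases w) (auto simp: starg_def trg_def edges_def)

lemma wg_verts: "verts (wg w) = set (wverts w)"
  by (cases w) (auto simp: starg_def trg_def verts_def)

lemma wel_range: "wvalid t w \<Longrightarrow> p \<in> set (wel w) \<Longrightarrow> fst p \<le> 1 \<and> 2 \<le> snd p"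
  by (cases w) (auto simp: list_all_iff)



lemma wit_rainbow:
  assumes v: "wvalid t w" and d: "distinct (map (\<lambda>(s,v). col s v) (wel w))"
    and cc: "\<And>s v. s \<le> 1 \<Longrightarrow> 2 \<le> v \<Longrightarrow> c {s,v} = col s v"
    and S: "S \<subseteq> set (wverts w)"
  shows "rainbow_S_tree (K2t t) c S (wg w)"
proof -
  have "inj_on (\<lambda>(s,v). col s v) (set (wel w))" using d by (simp add: distinct_map)
  moreover have "\<And>p. p \<in> set (wel w) \<Longrightarrow> (c \<circ> (\<lambda>(s,v). {s,v})) p = (\<lambda>(s,v). col s v) p"
    using wel_range[OF v] cc by auto
  ultimately have "inj_on (c \<circ> (\<lambda>(s,v). {s,v})) (set (wel w))"
    using inj_on_cong[of "set (wel w)" "c \<circ> (\<lambda>(s,v). {s,v})" "\<lambda>(s,v). col s v"] by simp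
  then have "inj_on c ((\<lambda>(s,v). {s,v}) ` set (wel w))" by (rule inj_on_imageI)
  then show ?thesis unfolding rainbow_S_tree_def
    using wg_props[OF v] S wg_edges wg_verts by auto
qed



definition triples :: "nat \<Rightarrow> (nat \<times> nat \<times> nat) list" where
  "triples n = concat (map (\<lambda>i. concat (map (\<lambda>j. map (\<lambda>k. (i,j,k)) [Suc j..<n]) [Suc i..<n])) [0..<n])"

lemma triples_mem: "i < j \<Longrightarrow> j < k \<Longrightarrow> k < n \<Longrightarrow> (i,j,k) \<in> set (triples n)"
  unfolding triples_def by simp (rule bexI[of _ i], rule bexI[of _ j], auto)

definition check :: "nat \<Rightarrow> (nat \<Rightarrow> nat \<Rightarrow> nat) \<Rightarrow> ((nat \<times> nat \<times> nat) \<times> wit) list \<Rightarrow> bool" where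
  "check t col ws \<longleftrightarrow> map fst ws = triples (t+2) \<and>
     list_all (\<lambda>((i,j,k),w). wvalid t w \<and> i \<in> set (wverts w) \<and> j \<in> set (wverts w) \<and> k \<in> set (wverts w)
        \<and> distinct (map (\<lambda>(s,v). col s v) (wel w))) ws"

lemma card3_sorted:
  fixes S :: "nat set"
  assumes "card S = 3"
  shows "\<exists>i j k. S = {i,j,k} \<and> i < j \<and> j < k"
proof -
  have fin: "finite S" using assms by (metis card.infinite zero_neq_numeral)
  define L where "L = sorted_list_of_set S"
  have len: "length L = 3" using assms fin L_def by simp
  have st: "sorted_wrt (<) L" using L_def by simp
  have sS: "set L = S" using L_def fin by simp
  obtain i j k where "L = [i,j,k]" using len by (metis length_0_conv length_Suc_conv numeral_3_eq_3)
  then show ?thesis using st sS by auto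
qed

lemma check_sound:
  assumes ch: "check t col ws" and cc: "\<And>s v. s \<le> 1 \<Longrightarrow> 2 \<le> v \<Longrightarrow> c {s,v} = col s v"
  shows "three_rainbow_coloring (K2t t) c"
  unfolding three_rainbow_coloring_def
proof (intro allI impI)
  fix S assume S: "S \<subseteq> verts (K2t t) \<and> card S = 3"
  have c3: "card S = 3" using S by simp
  obtain i j k where ijk: "S = {i,j,k}" "i < j" "j < k" using card3_sorted[OF c3] by blast
  have "k < t + 2" using S ijk K2t_verts by auto
  then have "(i,j,k) \<in> set (triples (t+2))" using triples_mem ijk by blast
  then have "(i,j,k) \<in> set (map fst ws)" using ch unfolding check_def by simp
  then obtain w where w: "((i,j,k),w) \<in> set ws" by auto
  then have ok: "wvalid t w" "i \<in> set (wverts w)" "j \<in> set (wverts w)" "k \<in> set (wverts w)"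
     "distinct (map (\<lambda>(s,v). col s v) (wel w))"
    using ch unfolding check_def list_all_iff by fastforce+
  have "S \<subseteq> set (wverts w)" using ok ijk by simp
  then show "\<exists>T. rainbow_S_tree (K2t t) c S T"
    using wit_rainbow[OF ok(1) ok(5) cc] by blast
qed



definition col0 :: "nat \<Rightarrow> nat \<Rightarrow> nat" where
  "col0 s v = (if s = 0 then [0,0,1,1,2,2,3,3] else [1,2,0,3,0,3,1,2]) ! (v - 2)"

definition c0 :: "nat set \<Rightarrow> nat" where
  "c0 e = col0 (Min e) (Max e)"

lemma c0_eq: "s \<le> 1 \<Longrightarrow> 2 \<le> v \<Longrightarrow> c0 {s,v} = col0 s v"
  unfolding c0_def by simp

definition ws5 :: "((nat \<times> nat \<times> nat) \<times> wit) list" where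
  "ws5 = [((0,1,2), Tw 0 [2] [] 2),
    ((0,1,3), Tw 0 [2] [3] 2),
    ((0,1,4), Tw 0 [3,4] [] 3),
    ((0,1,5), Tw 0 [2] [5] 2),
    ((0,1,6), Tw 0 [2,6] [] 2),
    ((0,2,3), Tw 0 [2] [3] 2),
    ((0,2,4), Sw 0 [2,4]),
    ((0,2,5), Sw 0 [2,5]),
    ((0,2,6), Sw 0 [2,6]),
    ((0,3,4), Sw 0 [3,4]),
    ((0,3,5), Sw 0 [3,5]),
    ((0,3,6), Sw 0 [3,6]),
    ((0,4,5), Tw 0 [3,4] [5] 3),
    ((0,4,6), Sw 0 [4,6]),
    ((0,5,6), Sw 0 [5,6]),
    ((1,2,3), Sw 1 [2,3]),
    ((1,2,4), Sw 1 [2,4]),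
    ((1,2,5), Sw 1 [2,5]),
    ((1,2,6), Sw 1 [2,6]),
    ((1,3,4), Sw 1 [3,4]),
    ((1,3,5), Sw 1 [3,5]),
    ((1,3,6), Sw 1 [3,6]),
    ((1,4,5), Sw 1 [4,5]),
    ((1,4,6), Tw 0 [4,6] [] 4),
    ((1,5,6), Sw 1 [5,6]),
    ((2,3,4), Sw 1 [2,3,4]),
    ((2,3,5), Sw 1 [2,3,5]),
    ((2,3,6), Sw 1 [2,3,6]),
    ((2,4,5), Sw 1 [2,4,5]),
    ((2,4,6), Sw 0 [2,4,6]),
    ((2,5,6), Sw 0 [2,5,6]),
    ((3,4,5), Sw 1 [3,4,5]),
    ((3,4,6), Sw 0 [3,4,6]),
    ((3,5,6), Sw 0 [3,5,6]),
    ((4,5,6), Tw 0 [4,6] [5] 4)]"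

definition ws6 :: "((nat \<times> nat \<times> nat) \<times> wit) list" where
  "ws6 = [((0,1,2), Tw 0 [2] [] 2),
    ((0,1,3), Tw 0 [2] [3] 2),
    ((0,1,4), Tw 0 [3,4] [] 3),
    ((0,1,5), Tw 0 [2] [5] 2),
    ((0,1,6), Tw 0 [2,6] [] 2),
    ((0,1,7), Tw 0 [2,7] [] 2),
    ((0,2,3), Tw 0 [2] [3] 2),
    ((0,2,4), Sw 0 [2,4]),
    ((0,2,5), Sw 0 [2,5]),
    ((0,2,6), Sw 0 [2,6]),
    ((0,2,7), Sw 0 [2,7]),
    ((0,3,4), Sw 0 [3,4]),
    ((0,3,5), Sw 0 [3,5]),
    ((0,3,6), Sw 0 [3,6]),
    ((0,3,7), Sw 0 [3,7]),
    ((0,4,5), Tw 0 [3,4] [5] 3),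
    ((0,4,6), Sw 0 [4,6]),
    ((0,4,7), Sw 0 [4,7]),
    ((0,5,6), Sw 0 [5,6]),
    ((0,5,7), Sw 0 [5,7]),
    ((0,6,7), Tw 0 [2,6] [7] 2),
    ((1,2,3), Sw 1 [2,3]),
    ((1,2,4), Sw 1 [2,4]),
    ((1,2,5), Sw 1 [2,5]),
    ((1,2,6), Sw 1 [2,6]),
    ((1,2,7), Sw 1 [2,7]),
    ((1,3,4), Sw 1 [3,4]),
    ((1,3,5), Sw 1 [3,5]),
    ((1,3,6), Sw 1 [3,6]),
    ((1,3,7), Sw 1 [3,7]),
    ((1,4,5), Sw 1 [4,5]),
    ((1,4,6), Tw 0 [4,6] [] 4),
    ((1,4,7), Sw 1 [4,7]),
    ((1,5,6), Sw 1 [5,6]),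
    ((1,5,7), Tw 0 [2,7] [5] 2),
    ((1,6,7), Sw 1 [6,7]),
    ((2,3,4), Sw 1 [2,3,4]),
    ((2,3,5), Sw 1 [2,3,5]),
    ((2,3,6), Sw 1 [2,3,6]),
    ((2,3,7), Sw 1 [2,3,7]),
    ((2,4,5), Sw 1 [2,4,5]),
    ((2,4,6), Sw 0 [2,4,6]),
    ((2,4,7), Sw 0 [2,4,7]),
    ((2,5,6), Sw 0 [2,5,6]),
    ((2,5,7), Sw 0 [2,5,7]),
    ((2,6,7), Sw 1 [2,6,7]),
    ((3,4,5), Sw 1 [3,4,5]),
    ((3,4,6), Sw 0 [3,4,6]),
    ((3,4,7), Sw 0 [3,4,7]),
    ((3,5,6), Sw 0 [3,5,6]),
    ((3,5,7), Sw 0 [3,5,7]),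
    ((3,6,7), Sw 1 [3,6,7]),
    ((4,5,6), Tw 0 [4,6] [5] 4),
    ((4,5,7), Tw 0 [4,7] [5] 4),
    ((4,6,7), Tw 0 [4,6] [7] 4),
    ((5,6,7), Tw 0 [5,7] [6] 5)]"

definition ws7 :: "((nat \<times> nat \<times> nat) \<times> wit) list" where
  "ws7 = [((0,1,2), Tw 0 [2] [] 2),
    ((0,1,3), Tw 0 [2] [3] 2),
    ((0,1,4), Tw 0 [3,4] [] 3),
    ((0,1,5), Tw 0 [2] [5] 2),
    ((0,1,6), Tw 0 [2,6] [] 2),
    ((0,1,7), Tw 0 [2,7] [] 2),
    ((0,1,8), Tw 0 [2,8] [] 2),
    ((0,2,3), Tw 0 [2] [3] 2),
    ((0,2,4), Sw 0 [2,4]),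
    ((0,2,5), Sw 0 [2,5]),
    ((0,2,6), Sw 0 [2,6]),
    ((0,2,7), Sw 0 [2,7]),
    ((0,2,8), Sw 0 [2,8]),
    ((0,3,4), Sw 0 [3,4]),
    ((0,3,5), Sw 0 [3,5]),
    ((0,3,6), Sw 0 [3,6]),
    ((0,3,7), Sw 0 [3,7]),
    ((0,3,8), Sw 0 [3,8]),
    ((0,4,5), Tw 0 [3,4] [5] 3),
    ((0,4,6), Sw 0 [4,6]),
    ((0,4,7), Sw 0 [4,7]),
    ((0,4,8), Sw 0 [4,8]),
    ((0,5,6), Sw 0 [5,6]),
    ((0,5,7), Sw 0 [5,7]),
    ((0,5,8), Sw 0 [5,8]),
    ((0,6,7), Tw 0 [2,6] [7] 2),
    ((0,6,8), Sw 0 [6,8]),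
    ((0,7,8), Sw 0 [7,8]),
    ((1,2,3), Sw 1 [2,3]),
    ((1,2,4), Sw 1 [2,4]),
    ((1,2,5), Sw 1 [2,5]),
    ((1,2,6), Sw 1 [2,6]),
    ((1,2,7), Sw 1 [2,7]),
    ((1,2,8), Tw 0 [2,8] [] 2),
    ((1,3,4), Sw 1 [3,4]),
    ((1,3,5), Sw 1 [3,5]),
    ((1,3,6), Sw 1 [3,6]),
    ((1,3,7), Sw 1 [3,7]),
    ((1,3,8), Sw 1 [3,8]),
    ((1,4,5), Sw 1 [4,5]),
    ((1,4,6), Tw 0 [4,6] [] 4),
    ((1,4,7), Sw 1 [4,7]),
    ((1,4,8), Sw 1 [4,8]),
    ((1,5,6), Sw 1 [5,6]),
    ((1,5,7), Tw 0 [2,7] [5] 2),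
    ((1,5,8), Sw 1 [5,8]),
    ((1,6,7), Sw 1 [6,7]),
    ((1,6,8), Sw 1 [6,8]),
    ((1,7,8), Sw 1 [7,8]),
    ((2,3,4), Sw 1 [2,3,4]),
    ((2,3,5), Sw 1 [2,3,5]),
    ((2,3,6), Sw 1 [2,3,6]),
    ((2,3,7), Sw 1 [2,3,7]),
    ((2,3,8), Tw 0 [2,8] [3] 2),
    ((2,4,5), Sw 1 [2,4,5]),
    ((2,4,6), Sw 0 [2,4,6]),
    ((2,4,7), Sw 0 [2,4,7]),
    ((2,4,8), Sw 0 [2,4,8]),
    ((2,5,6), Sw 0 [2,5,6]),
    ((2,5,7), Sw 0 [2,5,7]),
    ((2,5,8), Sw 0 [2,5,8]),
    ((2,6,7), Sw 1 [2,6,7]),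
    ((2,6,8), Sw 0 [2,6,8]),
    ((2,7,8), Sw 0 [2,7,8]),
    ((3,4,5), Sw 1 [3,4,5]),
    ((3,4,6), Sw 0 [3,4,6]),
    ((3,4,7), Sw 0 [3,4,7]),
    ((3,4,8), Sw 0 [3,4,8]),
    ((3,5,6), Sw 0 [3,5,6]),
    ((3,5,7), Sw 0 [3,5,7]),
    ((3,5,8), Sw 0 [3,5,8]),
    ((3,6,7), Sw 1 [3,6,7]),
    ((3,6,8), Sw 0 [3,6,8]),
    ((3,7,8), Sw 0 [3,7,8]),
    ((4,5,6), Tw 0 [4,6] [5] 4),
    ((4,5,7), Tw 0 [4,7] [5] 4),
    ((4,5,8), Sw 1 [4,5,8]),
    ((4,6,7), Tw 0 [4,6] [7] 4),
    ((4,6,8), Sw 0 [4,6,8]),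
    ((4,7,8), Sw 0 [4,7,8]),
    ((5,6,7), Tw 0 [5,7] [6] 5),
    ((5,6,8), Sw 0 [5,6,8]),
    ((5,7,8), Sw 0 [5,7,8]),
    ((6,7,8), Sw 1 [6,7,8])]"

definition ws8 :: "((nat \<times> nat \<times> nat) \<times> wit) list" where
  "ws8 = [((0,1,2), Tw 0 [2] [] 2),
    ((0,1,3), Tw 0 [2] [3] 2),
    ((0,1,4), Tw 0 [3,4] [] 3),
    ((0,1,5), Tw 0 [2] [5] 2),
    ((0,1,6), Tw 0 [2,6] [] 2),
    ((0,1,7), Tw 0 [2,7] [] 2),
    ((0,1,8), Tw 0 [2,8] [] 2),
    ((0,1,9), Tw 0 [2,9] [] 2),
    ((0,2,3), Tw 0 [2] [3] 2),
    ((0,2,4), Sw 0 [2,4]),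
    ((0,2,5), Sw 0 [2,5]),
    ((0,2,6), Sw 0 [2,6]),
    ((0,2,7), Sw 0 [2,7]),
    ((0,2,8), Sw 0 [2,8]),
    ((0,2,9), Sw 0 [2,9]),
    ((0,3,4), Sw 0 [3,4]),
    ((0,3,5), Sw 0 [3,5]),
    ((0,3,6), Sw 0 [3,6]),
    ((0,3,7), Sw 0 [3,7]),
    ((0,3,8), Sw 0 [3,8]),
    ((0,3,9), Sw 0 [3,9]),
    ((0,4,5), Tw 0 [3,4] [5] 3),
    ((0,4,6), Sw 0 [4,6]),
    ((0,4,7), Sw 0 [4,7]),
    ((0,4,8), Sw 0 [4,8]),
    ((0,4,9), Sw 0 [4,9]),
    ((0,5,6), Sw 0 [5,6]),
    ((0,5,7), Sw 0 [5,7]),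
    ((0,5,8), Sw 0 [5,8]),
    ((0,5,9), Sw 0 [5,9]),
    ((0,6,7), Tw 0 [2,6] [7] 2),
    ((0,6,8), Sw 0 [6,8]),
    ((0,6,9), Sw 0 [6,9]),
    ((0,7,8), Sw 0 [7,8]),
    ((0,7,9), Sw 0 [7,9]),
    ((0,8,9), Tw 0 [2,8] [9] 2),
    ((1,2,3), Sw 1 [2,3]),
    ((1,2,4), Sw 1 [2,4]),
    ((1,2,5), Sw 1 [2,5]),
    ((1,2,6), Sw 1 [2,6]),
    ((1,2,7), Sw 1 [2,7]),
    ((1,2,8), Tw 0 [2,8] [] 2),
    ((1,2,9), Sw 1 [2,9]),
    ((1,3,4), Sw 1 [3,4]),
    ((1,3,5), Sw 1 [3,5]),
    ((1,3,6), Sw 1 [3,6]),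
    ((1,3,7), Sw 1 [3,7]),
    ((1,3,8), Sw 1 [3,8]),
    ((1,3,9), Tw 0 [2,9] [3] 2),
    ((1,4,5), Sw 1 [4,5]),
    ((1,4,6), Tw 0 [4,6] [] 4),
    ((1,4,7), Sw 1 [4,7]),
    ((1,4,8), Sw 1 [4,8]),
    ((1,4,9), Sw 1 [4,9]),
    ((1,5,6), Sw 1 [5,6]),
    ((1,5,7), Tw 0 [2,7] [5] 2),
    ((1,5,8), Sw 1 [5,8]),
    ((1,5,9), Sw 1 [5,9]),
    ((1,6,7), Sw 1 [6,7]),
    ((1,6,8), Sw 1 [6,8]),
    ((1,6,9), Sw 1 [6,9]),
    ((1,7,8), Sw 1 [7,8]),
    ((1,7,9), Sw 1 [7,9]),
    ((1,8,9), Sw 1 [8,9]),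
    ((2,3,4), Sw 1 [2,3,4]),
    ((2,3,5), Sw 1 [2,3,5]),
    ((2,3,6), Sw 1 [2,3,6]),
    ((2,3,7), Sw 1 [2,3,7]),
    ((2,3,8), Tw 0 [2,8] [3] 2),
    ((2,3,9), Tw 0 [2,9] [3] 2),
    ((2,4,5), Sw 1 [2,4,5]),
    ((2,4,6), Sw 0 [2,4,6]),
    ((2,4,7), Sw 0 [2,4,7]),
    ((2,4,8), Sw 0 [2,4,8]),
    ((2,4,9), Sw 0 [2,4,9]),
    ((2,5,6), Sw 0 [2,5,6]),
    ((2,5,7), Sw 0 [2,5,7]),
    ((2,5,8), Sw 0 [2,5,8]),
    ((2,5,9), Sw 0 [2,5,9]),
    ((2,6,7), Sw 1 [2,6,7]),
    ((2,6,8), Sw 0 [2,6,8]),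
    ((2,6,9), Sw 0 [2,6,9]),
    ((2,7,8), Sw 0 [2,7,8]),
    ((2,7,9), Sw 0 [2,7,9]),
    ((2,8,9), Tw 0 [2,8] [9] 2),
    ((3,4,5), Sw 1 [3,4,5]),
    ((3,4,6), Sw 0 [3,4,6]),
    ((3,4,7), Sw 0 [3,4,7]),
    ((3,4,8), Sw 0 [3,4,8]),
    ((3,4,9), Sw 0 [3,4,9]),
    ((3,5,6), Sw 0 [3,5,6]),
    ((3,5,7), Sw 0 [3,5,7]),
    ((3,5,8), Sw 0 [3,5,8]),
    ((3,5,9), Sw 0 [3,5,9]),
    ((3,6,7), Sw 1 [3,6,7]),
    ((3,6,8), Sw 0 [3,6,8]),
    ((3,6,9), Sw 0 [3,6,9]),
    ((3,7,8), Sw 0 [3,7,8]),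
    ((3,7,9), Sw 0 [3,7,9]),
    ((3,8,9), Tw 0 [3,9] [8] 3),
    ((4,5,6), Tw 0 [4,6] [5] 4),
    ((4,5,7), Tw 0 [4,7] [5] 4),
    ((4,5,8), Sw 1 [4,5,8]),
    ((4,5,9), Sw 1 [4,5,9]),
    ((4,6,7), Tw 0 [4,6] [7] 4),
    ((4,6,8), Sw 0 [4,6,8]),
    ((4,6,9), Sw 0 [4,6,9]),
    ((4,7,8), Sw 0 [4,7,8]),
    ((4,7,9), Sw 0 [4,7,9]),
    ((4,8,9), Sw 1 [4,8,9]),
    ((5,6,7), Tw 0 [5,7] [6] 5),
    ((5,6,8), Sw 0 [5,6,8]),
    ((5,6,9), Sw 0 [5,6,9]),
    ((5,7,8), Sw 0 [5,7,8]),
    ((5,7,9), Sw 0 [5,7,9]),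
    ((5,8,9), Sw 1 [5,8,9]),
    ((6,7,8), Sw 1 [6,7,8]),
    ((6,7,9), Sw 1 [6,7,9]),
    ((6,8,9), Sw 1 [6,8,9]),
    ((7,8,9), Sw 1 [7,8,9])]"


lemma check5: "check 5 col0 ws5"
  unfolding check_def ws5_def col0_def triples_def by (simp add: upt_rec)



lemma check6: "check 6 col0 ws6"
  unfolding check_def ws6_def col0_def triples_def by (simp add: upt_rec)
lemma check7: "check 7 col0 ws7"
  unfolding check_def ws7_def col0_def triples_def by (simp add: upt_rec)
lemma check8: "check 8 col0 ws8"
  unfolding check_def ws8_def col0_def triples_def by (simp add: upt_rec)

lemma c0_3rc: "5 \<le> t \<Longrightarrow> t \<le> 8 \<Longrightarrow> three_rainbow_coloring (K2t t) c0"
proof -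
  assume "5 \<le> t" "t \<le> 8"
  then have "t = 5 \<or> t = 6 \<or> t = 7 \<or> t = 8" by arith
  then show ?thesis
    using check_sound[OF check5 c0_eq] check_sound[OF check6 c0_eq]
      check_sound[OF check7 c0_eq] check_sound[OF check8 c0_eq] by auto
qed

lemma col0_range: "v - 2 < 8 \<Longrightarrow> col0 s v \<in> {0,1,2,3}"
proof -
  assume "v - 2 < 8"
  then have "v - 2 = 0 \<or> v - 2 = 1 \<or> v - 2 = 2 \<or> v - 2 = 3 \<or> v - 2 = 4 \<or> v - 2 = 5 \<or> v - 2 = 6 \<or> v - 2 = 7"
    by arith
  then show ?thesis unfolding col0_def by (elim disjE) simp_all
qed

lemma c0_card: "5 \<le> t \<Longrightarrow> t \<le> 8 \<Longrightarrow> card (c0 ` edges (K2t t)) = 4"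
proof -
  assume t: "5 \<le> t" "t \<le> 8"
  have "c0 ` edges (K2t t) = {0,1,2,3}"
  proof
    show "c0 ` edges (K2t t) \<subseteq> {0,1,2,3}"
    proof
      fix x assume "x \<in> c0 ` edges (K2t t)"
      then obtain e where "e \<in> edges (K2t t)" "x = c0 e" by blast
      then obtain s v where "e = {s,v}" "s \<le> 1" "2 \<le> v" "v < t+2" "x = c0 e" unfolding K2t_edge by blast
      then show "x \<in> {0,1,2,3}" using c0_eq col0_range t by simp
    qed
    have e: "{s,v} \<in> edges (K2t t)" if "s \<le> 1" "2 \<le> v" "v \<le> 6" for s v
      using K2t_edgeI that t by simp
    have E: "{0,2} \<in> edges (K2t t)" "{0,4} \<in> edges (K2t t)" "{0,6} \<in> edges (K2t t)" "{1,5} \<in> edges (K2t t)"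
      using e[of 0 2] e[of 0 4] e[of 0 6] e[of 1 5] by simp_all
    have cv: "0 = c0 {0,2}" "1 = c0 {0,4}" "2 = c0 {0,6}" "3 = c0 {1,5}"
      by (simp_all add: c0_eq col0_def)
    have "0 \<in> c0 ` edges (K2t t)" by (rule image_eqI[where x="{0,2}"]) (use E cv in simp_all)
    moreover have "1 \<in> c0 ` edges (K2t t)" by (rule image_eqI[where x="{0,4}"]) (use E cv in simp_all)
    moreover have "2 \<in> c0 ` edges (K2t t)" by (rule image_eqI[where x="{0,6}"]) (use E cv in simp_all)
    moreover have "3 \<in> c0 ` edges (K2t t)" by (rule image_eqI[where x="{1,5}"]) (use E cv in simp_all)
    ultimately show "{0,1,2,3} \<subseteq> c0 ` edges (K2t t)" by simp
  qed
  then show ?thesis by simp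
qed

definition cinj :: "nat \<Rightarrow> nat set \<Rightarrow> nat" where
  "cinj t e = Max e + (t+2) * Min e"

lemma cinj_eq: "s \<le> 1 \<Longrightarrow> 2 \<le> v \<Longrightarrow> cinj t {s,v} = v + (t+2) * s"
  unfolding cinj_def by simp

lemma cinj_inj: "inj_on (cinj t) (edges (K2t t))"
proof (rule inj_onI)
  fix e e' assume e: "e \<in> edges (K2t t)" "e' \<in> edges (K2t t)" "cinj t e = cinj t e'"
  obtain s v where sv: "e = {s,v}" "s \<le> 1" "2 \<le> v" "v < t+2" using e(1) unfolding K2t_edge by blast
  obtain s' v' where sv': "e' = {s',v'}" "s' \<le> 1" "2 \<le> v'" "v' < t+2" using e(2) unfolding K2t_edge by blast
  have "v + (t+2) * s = v' + (t+2) * s'" using e(3) sv sv' cinj_eq by simp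
  then have "s = s' \<and> v = v'" using sv sv'
    by (cases s; cases s') auto
  then show "e = e'" using sv sv' by simp
qed

lemma cinj_3rc:
  assumes "2 \<le> t"
  shows "three_rainbow_coloring (K2t t) (cinj t)"
  unfolding three_rainbow_coloring_def
proof (intro allI impI)
  fix S assume S: "S \<subseteq> verts (K2t t) \<and> card S = 3"
  define T where "T = trg 0 {2..<t+2} {} 2"
  have P: "subgraph T (K2t t) \<and> is_tree T"
    unfolding T_def using assms by (intro trg_props) auto
  have "verts T = {0..<t+2}" unfolding T_def trg_def verts_def by auto
  then have "S \<subseteq> verts T" using S K2t_verts by simp
  moreover have "inj_on (cinj t) (edges T)"
    using cinj_inj P unfolding subgraph_def by (blast intro: inj_on_subset)
  ultimately show "\<exists>T. rainbow_S_tree (K2t t) (cinj t) S T"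
    using P unfolding rainbow_S_tree_def by blast
qed

lemma lower_bounds:
  assumes rc: "three_rainbow_coloring (K2t t) c"
  shows "5 \<le> t \<Longrightarrow> 4 \<le> card (c ` edges (K2t t))"
    and "9 \<le> t \<Longrightarrow> 5 \<le> card (c ` edges (K2t t))"
proof -
  define C where "C = c ` edges (K2t t)"
  define W where "W = {2..<t+2}"
  define a where "a = (\<lambda>w. c {0,w})"
  define b where "b = (\<lambda>w. c {1,w})"
  have fC: "finite C" using fin_edges C_def by simp
  have ab: "a ` W \<subseteq> C" "b ` W \<subseteq> C"
    unfolding a_def b_def C_def W_def using K2t_edgeI by auto
  have fW: "finite W" "card W = t" unfolding W_def by auto
  have gd: "good a b i j k \<or> 5 \<le> card C"
    if ijk: "i \<in> W" "j \<in> W" "k \<in> W" "distinct [i,j,k]" for i j k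
  proof -
    have "{i,j,k} \<subseteq> verts (K2t t)" using ijk K2t_verts W_def by auto
    moreover have "card {i,j,k} = 3" using ijk by simp
    ultimately obtain T where "rainbow_S_tree (K2t t) c {i,j,k} T"
      using rc unfolding three_rainbow_coloring_def by blast
    then show ?thesis using tree_good ijk unfolding a_def b_def C_def W_def by blast
  qed
  show "4 \<le> card C" if "5 \<le> t"
  proof (rule ccontr)
    assume "\<not> 4 \<le> card C"
    then have c3: "card C \<le> 3" by simp
    show False
    proof (rule three_colors[OF fC c3 ab fW(1)])
      show "5 \<le> card W" using fW that by simp
      fix i j k assume h: "i \<in> W" "j \<in> W" "k \<in> W" "distinct [i,j,k]"
      then have "good a b i j k" using gd c3 by fastforce
      then show "distinct [a i, a j, a k] \<or> distinct [b i, b j, b k]"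
        using good_three[OF fC c3 ab h(1-3)] by blast
    qed
  qed
  show "5 \<le> card C" if "9 \<le> t"
  proof (rule ccontr)
    assume "\<not> 5 \<le> card C"
    then have c4: "card C \<le> 4" by simp
    show False
    proof (rule four_colors[OF fC c4 ab fW(1)])
      show "9 \<le> card W" using fW that by simp
      fix i j k assume h: "i \<in> W" "j \<in> W" "k \<in> W" "distinct [i,j,k]"
      then show "good a b i j k" using gd c4 by fastforce
    qed
  qed
qed

theorem lemma4:
  shows "(\<forall>t::nat. 5 \<le> t \<and> t \<le> 8 \<longrightarrow> rx3 (K2t t) = 4) \<and>
         (\<forall>t::nat. t \<ge> 9 \<longrightarrow> rx3 (K2t t) \<ge> 5)"
proof (intro conjI allI impI)
  fix t :: nat assume t: "5 \<le> t \<and> t \<le> 8"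
  let ?P = "\<lambda>k. \<exists>c. three_rainbow_coloring (K2t t) c \<and> card (c ` edges (K2t t)) = k"
  have P4: "?P 4" using c0_3rc c0_card t by blast
  have le: "rx3 (K2t t) \<le> 4" unfolding rx3_def by (rule Least_le[of ?P 4]) (rule P4)
  have "?P (rx3 (K2t t))" unfolding rx3_def by (rule LeastI[of ?P 4]) (rule P4)
  then obtain c where "three_rainbow_coloring (K2t t) c" "card (c ` edges (K2t t)) = rx3 (K2t t)" by blast
  then have "4 \<le> rx3 (K2t t)" using lower_bounds(1)[of t c] t by simp
  then show "rx3 (K2t t) = 4" using le by simp
next
  fix t :: nat assume t: "9 \<le> t"
  let ?P = "\<lambda>k. \<exists>c. three_rainbow_coloring (K2t t) c \<and> card (c ` edges (K2t t)) = k"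
  have Pk: "?P (card (cinj t ` edges (K2t t)))" using cinj_3rc[of t] t by (intro exI[of _ "cinj t"]) simp
  have "?P (rx3 (K2t t))" unfolding rx3_def by (rule LeastI[of ?P "card (cinj t ` edges (K2t t))"]) (rule Pk)
  then obtain c where "three_rainbow_coloring (K2t t) c" "card (c ` edges (K2t t)) = rx3 (K2t t)" by blast
  then show "5 \<le> rx3 (K2t t)" using lower_bounds(2)[of t c] t by simp
qed


end
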